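(* Let $f\in L^p(\mathbb{R}^d)$ be an extremizer for $\mathcal{E}$, i.e. $f\neq0$ and $\|\mathcal{E}f\|_q=A_p\|f\|_p$, and let $(\tau_0,\xi_0)\in\mathbb{R}\times\mathbb{R}^d$. For $\lambda>0$ set $f_\lambda(\xi)=\lambda^{d/p}f(\lambda\xi)$. Then \[ \lim_{\lambda\to0}\frac{\|\mathcal{E}f_\lambda+\mathcal{E}_{(\tau_0,\xi_0)}f_\lambda\|_q}{2^{1/p}\|f\|_p}=2^{1/p'}A_p. \]
   Context: Fix $d\in\mathbb{N}$, $p,q$ with $q>p$, $q=\frac{d+2}{d}p'$, $1/p+1/p'=1$. $\mathcal{E}f(t,x)=\int_{\mathbb{R}^d} e^{i(t|\xi|^2+x\cdot\xi)}f(\xi)\,d\xi$, $\mathcal{E}_{(\tau_0,\xi_0)}g(t,x)=\int_{\mathbb{R}^d} e^{i(t(|\xi-\xi_0|^2+\tau_0)+x\cdot\xi)}g(\xi)\,d\xi$, and $A_p=\sup_{f\neq0}\|\mathcal{E}f\|_q/\|f\|_p<\infty$. Note $(\|f_\lambda\|_p^p+\|f_\lambda\|_p^p)^{1/p}=2^{1/p}\|f\|_p$. *)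

theory Defs
  imports "HOL-Analysis.Analysis"
begin

definition lpnorm :: "real \<Rightarrow> ('b::euclidean_space \<Rightarrow> complex) \<Rightarrow> ennreal" where
  "lpnorm r g =
     (let I = (\<integral>\<^sup>+ z. ennreal (norm (g z) powr r) \<partial>lborel)
      in if I = \<infinity> then \<infinity> else ennreal (enn2real I powr (1 / r)))"

definition in_Lp :: "real \<Rightarrow> ('b::euclidean_space \<Rightarrow> complex) \<Rightarrow> bool" where
  "in_Lp r g \<longleftrightarrow> g \<in> borel_measurable lborel \<and>
     (\<integral>\<^sup>+ z. ennreal (norm (g z) powr r) \<partial>lborel) < \<infinity>"

definition ext_op :: "('a::euclidean_space \<Rightarrow> complex) \<Rightarrow> real \<times> 'a \<Rightarrow> complex" where
  "ext_op g = (\<lambda>(t, x). \<integral> \<xi>. exp (\<i> * complex_of_real (t * (norm \<xi>)\<^sup>2 + inner x \<xi>)) * g \<xi> \<partial>lborel)"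

definition ext_op_shift :: "real \<Rightarrow> 'a::euclidean_space \<Rightarrow> ('a \<Rightarrow> complex) \<Rightarrow> real \<times> 'a \<Rightarrow> complex" where
  "ext_op_shift \<tau>0 \<xi>0 g = (\<lambda>(t, x). \<integral> \<xi>.
      exp (\<i> * complex_of_real (t * ((norm (\<xi> - \<xi>0))\<^sup>2 + \<tau>0) + inner x \<xi>)) * g \<xi> \<partial>lborel)"

text \<open>Truncation of g to the closed ball of radius R (an L^1 function if g is in L^p, p>1).\<close>
definition trunc :: "real \<Rightarrow> ('a::euclidean_space \<Rightarrow> complex) \<Rightarrow> 'a \<Rightarrow> complex" where
  "trunc R g = (\<lambda>\<xi>. if norm \<xi> \<le> R then g \<xi> else 0)"

text \<open>L^q norm of T g for g in L^p, where T is defined on L^p by the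
  standard density extension: T g is the L^q limit of T applied to the
  truncations of g, so its norm is the limit of the norms.\<close>
definition ext_norm :: "real \<Rightarrow> (('a::euclidean_space \<Rightarrow> complex) \<Rightarrow> real \<times> 'a \<Rightarrow> complex)
     \<Rightarrow> ('a \<Rightarrow> complex) \<Rightarrow> ennreal" where
  "ext_norm q T g = Lim at_top (\<lambda>R::real. lpnorm q (T (trunc R g)))"

definition A_const :: "real \<Rightarrow> real \<Rightarrow> 'a::euclidean_space itself \<Rightarrow> ennreal" where
  "A_const p q _ = (SUP g \<in> {g :: 'a \<Rightarrow> complex. in_Lp p g \<and> lpnorm p g \<noteq> 0}.
       ext_norm q ext_op g / lpnorm p g)"

end

theory Submission
  imports Defs
begin

lemma powr_conv:
  fixes X Y t r :: real
  assumes "0 \<le> t" "t \<le> 1" "0 \<le> X" "0 \<le> Y" "1 \<le> r"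
  shows "((1 - t) * X + t * Y) powr r \<le> (1 - t) * X powr r + t * Y powr r"
proof -
  have pw: "s powr r \<le> s" if "0 \<le> s" "s \<le> 1" for s :: real
    using that assms(5) powr_mono'[of 1 r s] by simp
  show ?thesis
  proof (cases "X = 0")
    case True
    then have "((1 - t) * X + t * Y) powr r = t powr r * Y powr r"
      using assms by (simp add: powr_mult)
    also have "\<dots> \<le> t * Y powr r" using pw[of t] assms by (intro mult_right_mono) auto
    finally show ?thesis using True assms by simp
  next
    case X: False
    show ?thesis
    proof (cases "Y = 0")
      case True
      then have "((1 - t) * X + t * Y) powr r = (1-t) powr r * X powr r"
        using assms by (simp add: powr_mult)
      also have "\<dots> \<le> (1-t) * X powr r" using pw[of "1-t"] assms by (intro mult_right_mono) auto
      finally show ?thesis using True assms by simp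
    next
      case False
      with X assms show ?thesis
        using convex_onD[OF powr_convex[OF assms(5)], of t X Y] by simp
    qed
  qed
qed



definition J :: "real \<Rightarrow> ('b::euclidean_space \<Rightarrow> complex) \<Rightarrow> real" where
  "J r g = (\<integral> z. norm (g z) powr r \<partial>lborel)"

definition LQ :: "real \<Rightarrow> ('b::euclidean_space \<Rightarrow> complex) \<Rightarrow> real" where
  "LQ r g = J r g powr (1 / r)"

lemma J_nonneg: "0 \<le> J r g"
  unfolding J_def by (rule integral_nonneg_AE) auto

lemma LQ_nonneg: "0 \<le> LQ r g"
  unfolding LQ_def by simp

lemma in_Lp_iff: "in_Lp r g \<longleftrightarrow> g \<in> borel_measurable lborel \<and> integrable lborel (\<lambda>z. norm (g z) powr r)"
proof
  assume a: "in_Lp r g"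
  then have m: "g \<in> borel_measurable lborel" unfolding in_Lp_def by auto
  then have "(\<lambda>z. norm (g z) powr r) \<in> borel_measurable lborel" by measurable
  with a m show "g \<in> borel_measurable lborel \<and> integrable lborel (\<lambda>z. norm (g z) powr r)"
    unfolding in_Lp_def integrable_iff_bounded by simp
next
  assume a: "g \<in> borel_measurable lborel \<and> integrable lborel (\<lambda>z. norm (g z) powr r)"
  then show "in_Lp r g" unfolding in_Lp_def integrable_iff_bounded by simp
qed

lemma in_Lp_integrable: "in_Lp r g \<Longrightarrow> integrable lborel (\<lambda>z. norm (g z) powr r)"
  by (simp add: in_Lp_iff)

lemma in_Lp_meas: "in_Lp r g \<Longrightarrow> g \<in> borel_measurable lborel"
  by (simp add: in_Lp_def)

lemma nn_J: "in_Lp r g \<Longrightarrow> (\<integral>\<^sup>+ z. ennreal (norm (g z) powr r) \<partial>lborel) = ennreal (J r g)"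
  unfolding J_def by (rule nn_integral_eq_integral) (auto simp: in_Lp_integrable)

lemma lpnorm_LQ: "in_Lp r g \<Longrightarrow> lpnorm r g = ennreal (LQ r g)"
  unfolding lpnorm_def LQ_def Let_def using nn_J[of r g] J_nonneg[of r g] by simp

lemma LQ_powr: "0 < r \<Longrightarrow> LQ r g powr r = J r g"
  unfolding LQ_def using J_nonneg[of r g] by (simp add: powr_powr)

lemma J_LQ: "0 < r \<Longrightarrow> J r g = LQ r g powr r"
  by (simp add: LQ_powr)

lemma J_zero_AE:
  assumes "in_Lp r g" "J r g = 0" "0 < r"
  shows "AE z in lborel. g z = 0"
proof -
  have "AE z in lborel. norm (g z) powr r = 0"
    using assms(2) in_Lp_integrable[OF assms(1)] unfolding J_def
    by (subst integral_nonneg_eq_0_iff_AE[symmetric]) auto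
  then show ?thesis by eventually_elim simp
qed

lemma LQ_zero_AE:
  assumes "in_Lp r g" "LQ r g = 0" "0 < r"
  shows "AE z in lborel. g z = 0"
  using J_zero_AE[OF assms(1) _ assms(3)] assms(2) J_LQ[OF assms(3), of g] by simp

lemma in_Lp_AE_cong:
  assumes "in_Lp r g" "h \<in> borel_measurable lborel" "AE z in lborel. g z = h z"
  shows "in_Lp r h" "LQ r h = LQ r g"
proof -
  have ae: "AE z in lborel. norm (g z) powr r = norm (h z) powr r"
    using assms(3) by eventually_elim simp
  moreover have hm: "(\<lambda>z. norm (h z) powr r) \<in> borel_measurable lborel" using assms(2) by measurable
  ultimately show i: "in_Lp r h" using assms(1,2) unfolding in_Lp_iff
    using integrable_cong_AE by blast
  show "LQ r h = LQ r g"
  proof -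
    have "(\<integral>z. norm (h z) powr r \<partial>lborel) = (\<integral>z. norm (g z) powr r \<partial>lborel)"
      using ae hm borel_measurable_integrable[OF in_Lp_integrable[OF assms(1)]]
      by (intro integral_cong_AE) (auto elim: AE_mp)
    then show ?thesis by (simp add: LQ_def J_def)
  qed
qed

lemma in_Lp_mono:
  assumes "in_Lp r v" "u \<in> borel_measurable lborel" "\<And>z. norm (u z) \<le> norm (v z)" "0 < r"
  shows "in_Lp r u" "LQ r u \<le> LQ r v"
proof -
  have mu: "(\<lambda>z. norm (u z) powr r) \<in> borel_measurable lborel" using assms(2) by measurable
  have le: "norm (u z) powr r \<le> norm (v z) powr r" for z
    using assms(3,4) by (intro powr_mono2) auto
  have iu: "integrable lborel (\<lambda>z. norm (u z) powr r)"
    using in_Lp_integrable[OF assms(1)] mu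
    by (rule Bochner_Integration.integrable_bound) (use le in auto)
  then show "in_Lp r u" using assms(2) by (simp add: in_Lp_iff)
  have "J r u \<le> J r v" unfolding J_def
    using iu in_Lp_integrable[OF assms(1)] le by (intro integral_mono) auto
  then show "LQ r u \<le> LQ r v" unfolding LQ_def using J_nonneg[of r u] assms(4)
    by (intro powr_mono2) auto
qed

lemma in_Lp_scale:
  assumes "in_Lp r u" "0 < r"
  shows "in_Lp r (\<lambda>z. c * u z)" "LQ r (\<lambda>z. c * u z) = norm c * LQ r u"
proof -
  have eq: "norm (c * u z) powr r = norm c powr r * norm (u z) powr r" for z
    by (simp add: norm_mult powr_mult)
  have m: "(\<lambda>z. c * u z) \<in> borel_measurable lborel" using in_Lp_meas[OF assms(1)] by measurable
  show "in_Lp r (\<lambda>z. c * u z)" unfolding in_Lp_iff eq using m in_Lp_integrable[OF assms(1)] by auto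
  have "J r (\<lambda>z. c * u z) = norm c powr r * J r u" unfolding J_def eq by simp
  then show "LQ r (\<lambda>z. c * u z) = norm c * LQ r u" unfolding LQ_def using J_nonneg[of r u] assms(2)
    by (simp add: powr_mult powr_powr)
qed



lemma minkowski:
  assumes r: "1 \<le> r" and u: "in_Lp r u" and v: "in_Lp r v"
  shows "in_Lp r (\<lambda>z. u z + v z)" "LQ r (\<lambda>z. u z + v z) \<le> LQ r u + LQ r v"
proof -
  have r0: "0 < r" using r by simp
  have mu: "u \<in> borel_measurable lborel" "v \<in> borel_measurable lborel"
    using u v in_Lp_meas by blast+
  have mw: "(\<lambda>z. u z + v z) \<in> borel_measurable lborel" using mu by measurable
  have mw': "(\<lambda>z. norm (u z + v z) powr r) \<in> borel_measurable lborel" using mw by measurable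
  have iu: "integrable lborel (\<lambda>z. norm (u z) powr r)" and iv: "integrable lborel (\<lambda>z. norm (v z) powr r)"
    using u v by (auto simp: in_Lp_integrable)
  have pt: "norm (u z + v z) powr r \<le> 2 powr (r - 1) * (norm (u z) powr r + norm (v z) powr r)" for z
  proof -
    have "norm (u z + v z) powr r \<le> (norm (u z) + norm (v z)) powr r"
      using r0 by (intro powr_mono2) (auto simp: norm_triangle_ineq)
    also have "(norm (u z) + norm (v z)) = 2 * ((1 - 1/2) * norm (u z) + 1/2 * norm (v z))" by simp
    also have "(2 * ((1 - 1/2) * norm (u z) + 1/2 * norm (v z))) powr r
        = 2 powr r * ((1 - 1/2) * norm (u z) + 1/2 * norm (v z)) powr r"
      by (subst powr_mult) auto
    also have "\<dots> \<le> 2 powr r * ((1 - 1/2) * norm (u z) powr r + 1/2 * norm (v z) powr r)"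
      using powr_conv[of "1/2" "norm (u z)" "norm (v z)" r] r by (intro mult_left_mono) auto
    also have "\<dots> = 2 powr (r - 1) * (norm (u z) powr r + norm (v z) powr r)"
      by (simp add: powr_diff field_simps)
    finally show ?thesis .
  qed
  have iw: "integrable lborel (\<lambda>z. norm (u z + v z) powr r)"
  proof (rule Bochner_Integration.integrable_bound[OF _ mw'])
    show "integrable lborel (\<lambda>z. 2 powr (r - 1) * (norm (u z) powr r + norm (v z) powr r))"
      using iu iv by auto
    show "AE z in lborel. norm (norm (u z + v z) powr r)
        \<le> norm (2 powr (r - 1) * (norm (u z) powr r + norm (v z) powr r))"
      using pt by (intro AE_I2) (auto intro: order_trans[OF _ abs_ge_self])
  qed
  show w: "in_Lp r (\<lambda>z. u z + v z)" using mw iw by (simp add: in_Lp_iff)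
  define a where "a = LQ r u"
  define b where "b = LQ r v"
  have a0: "0 \<le> a" "0 \<le> b" unfolding a_def b_def by (auto simp: LQ_nonneg)
  show "LQ r (\<lambda>z. u z + v z) \<le> LQ r u + LQ r v"
  proof (cases "a = 0 \<or> b = 0")
    case True
    then show ?thesis
    proof
      assume "a = 0"
      then have "AE z in lborel. u z = 0" using LQ_zero_AE[OF u _ r0] by (simp add: a_def)
      then have "AE z in lborel. v z = u z + v z" by eventually_elim simp
      then have "LQ r (\<lambda>z. u z + v z) = LQ r v" using in_Lp_AE_cong(2)[OF v mw] by simp
      then show ?thesis using a0 a_def by simp
    next
      assume "b = 0"
      then have "AE z in lborel. v z = 0" using LQ_zero_AE[OF v _ r0] by (simp add: b_def)
      then have "AE z in lborel. u z = u z + v z" by eventually_elim simp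
      then have "LQ r (\<lambda>z. u z + v z) = LQ r u" using in_Lp_AE_cong(2)[OF u mw] by simp
      then show ?thesis using a0 b_def by simp
    qed
  next
    case False
    then have ap: "0 < a" "0 < b" using a0 by auto
    define t where "t = b / (a + b)"
    have t01: "0 \<le> t" "t \<le> 1" "1 - t = a / (a + b)" using ap by (auto simp: t_def field_simps)
    have Ju: "J r u = a powr r" and Jv: "J r v = b powr r"
      using r0 by (auto simp: a_def b_def J_LQ)
    have pt2: "norm (u z + v z) powr r \<le>
        (a + b) powr r * ((1 - t) / a powr r * norm (u z) powr r + t / b powr r * norm (v z) powr r)" for z
    proof -
      have "norm (u z + v z) powr r \<le> (norm (u z) + norm (v z)) powr r"
        using r0 by (intro powr_mono2) (auto simp: norm_triangle_ineq)
      also have "norm (u z) + norm (v z) = (a + b) * ((1 - t) * (norm (u z) / a) + t * (norm (v z) / b))"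
      proof -
        have "(1 - t) * (norm (u z) / a) = norm (u z) / (a + b)" using ap unfolding t01(3) by simp
        moreover have "t * (norm (v z) / b) = norm (v z) / (a + b)" using ap unfolding t_def by simp
        ultimately show ?thesis using ap by (simp add: add_divide_distrib[symmetric])
      qed
      also have "((a + b) * ((1 - t) * (norm (u z) / a) + t * (norm (v z) / b))) powr r
          = (a + b) powr r * ((1 - t) * (norm (u z) / a) + t * (norm (v z) / b)) powr r"
        using ap t01 by (subst powr_mult) auto
      also have "\<dots> \<le> (a + b) powr r * ((1 - t) * (norm (u z) / a) powr r + t * (norm (v z) / b) powr r)"
        using powr_conv[of t "norm (u z) / a" "norm (v z) / b" r] r t01 ap by (intro mult_left_mono) auto
      also have "\<dots> = (a + b) powr r * ((1 - t) / a powr r * norm (u z) powr r + t / b powr r * norm (v z) powr r)"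
        using ap by (simp add: powr_divide)
      finally show ?thesis .
    qed
    have "J r (\<lambda>z. u z + v z) \<le> (\<integral>z. (a + b) powr r * ((1 - t) / a powr r * norm (u z) powr r + t / b powr r * norm (v z) powr r) \<partial>lborel)"
      unfolding J_def using iw iu iv pt2 by (intro integral_mono) auto
    also have "\<dots> = (a + b) powr r * ((1 - t) / a powr r * J r u + t / b powr r * J r v)"
      unfolding J_def using iu iv by simp
    also have "\<dots> = (a + b) powr r" using ap by (simp add: Ju Jv)
    finally have "J r (\<lambda>z. u z + v z) \<le> (a + b) powr r" .
    then have "J r (\<lambda>z. u z + v z) powr (1 / r) \<le> ((a + b) powr r) powr (1 / r)"
      using J_nonneg r0 by (intro powr_mono2) auto
    also have "\<dots> = a + b" using ap r0 by (simp add: powr_powr)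
    finally show ?thesis unfolding LQ_def a_def b_def .
  qed
qed

lemma LQ_diff:
  assumes r: "1 \<le> r" and u: "in_Lp r u" and v: "in_Lp r v"
  shows "in_Lp r (\<lambda>z. u z - v z)" "\<bar>LQ r u - LQ r v\<bar> \<le> LQ r (\<lambda>z. u z - v z)"
proof -
  have r0: "0 < r" using r by simp
  have mv: "in_Lp r (\<lambda>z. (-1) * v z)" by (rule in_Lp_scale(1)[OF v r0])
  show d: "in_Lp r (\<lambda>z. u z - v z)" using minkowski(1)[OF r u mv] by simp
  have nd: "in_Lp r (\<lambda>z. (-1) * (u z - v z))" by (rule in_Lp_scale(1)[OF d r0])
  have 1: "LQ r u \<le> LQ r (\<lambda>z. u z - v z) + LQ r v"
    using minkowski(2)[OF r d v] by simp
  have 2: "LQ r v \<le> LQ r (\<lambda>z. (-1) * (u z - v z)) + LQ r u"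
    using minkowski(2)[OF r nd u] by simp
  have 3: "LQ r (\<lambda>z. (-1) * (u z - v z)) = LQ r (\<lambda>z. u z - v z)"
    using in_Lp_scale(2)[OF d r0, of "-1"] by simp
  show "\<bar>LQ r u - LQ r v\<bar> \<le> LQ r (\<lambda>z. u z - v z)" using 1 2 3 by linarith
qed



lemma lborel_scale_integral:
  fixes F :: "'a::euclidean_space \<Rightarrow> complex" and c :: real
  assumes F[measurable]: "F \<in> borel_measurable borel" and c: "c \<noteq> 0"
  shows "(\<integral>x. F x \<partial>lborel) = (\<bar>c\<bar> ^ DIM('a)) *\<^sub>R (\<integral>x. F (c *\<^sub>R x) \<partial>lborel)"
proof -
  have "(\<integral>x. F x \<partial>lborel) = (\<integral>x. F x \<partial>(density (distr lborel borel (\<lambda>x. 0 + c *\<^sub>R x)) (\<lambda>_. ennreal (\<bar>c\<bar> ^ DIM('a)))))"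
    using arg_cong[OF lborel_affine[OF c, of "0::'a"], of "\<lambda>M. integral\<^sup>L M F"] by (simp add: ennreal_power)
  also have "\<dots> = (\<integral>x. (\<bar>c\<bar> ^ DIM('a)) *\<^sub>R F x \<partial>(distr lborel borel (\<lambda>x. 0 + c *\<^sub>R x)))"
    by (subst integral_density) auto
  also have "\<dots> = (\<integral>x. (\<bar>c\<bar> ^ DIM('a)) *\<^sub>R F (c *\<^sub>R x) \<partial>lborel)"
    by (subst integral_distr) auto
  also have "\<dots> = (\<bar>c\<bar> ^ DIM('a)) *\<^sub>R (\<integral>x. F (c *\<^sub>R x) \<partial>lborel)"
    by simp
  finally show ?thesis .
qed

lemma lborel_scale_nn:
  fixes F :: "'a::euclidean_space \<Rightarrow> ennreal" and c :: real
  assumes F[measurable]: "F \<in> borel_measurable borel" and c: "c \<noteq> 0"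
  shows "(\<integral>\<^sup>+x. F x \<partial>lborel) = ennreal (\<bar>c\<bar> ^ DIM('a)) * (\<integral>\<^sup>+x. F (c *\<^sub>R x) \<partial>lborel)"
proof -
  have "(\<integral>\<^sup>+x. F x \<partial>lborel) = (\<integral>\<^sup>+x. F x \<partial>(density (distr lborel borel (\<lambda>x. 0 + c *\<^sub>R x)) (\<lambda>_. ennreal (\<bar>c\<bar> ^ DIM('a)))))"
    using arg_cong[OF lborel_affine[OF c, of "0::'a"], of "\<lambda>M. integral\<^sup>N M F"] by (simp add: ennreal_power)
  also have "\<dots> = (\<integral>\<^sup>+x. ennreal (\<bar>c\<bar> ^ DIM('a)) * F x \<partial>(distr lborel borel (\<lambda>x. 0 + c *\<^sub>R x)))"
    by (subst nn_integral_density) auto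
  also have "\<dots> = (\<integral>\<^sup>+x. ennreal (\<bar>c\<bar> ^ DIM('a)) * F (c *\<^sub>R x) \<partial>lborel)"
    by (subst nn_integral_distr) auto
  also have "\<dots> = ennreal (\<bar>c\<bar> ^ DIM('a)) * (\<integral>\<^sup>+x. F (c *\<^sub>R x) \<partial>lborel)"
    by (simp add: nn_integral_cmult)
  finally show ?thesis .
qed

lemma lborel_transl_nn:
  fixes F :: "'a::euclidean_space \<Rightarrow> ennreal" and t :: 'a
  assumes F[measurable]: "F \<in> borel_measurable borel"
  shows "(\<integral>\<^sup>+x. F x \<partial>lborel) = (\<integral>\<^sup>+x. F (t + x) \<partial>lborel)"
proof -
  have "(\<integral>\<^sup>+x. F x \<partial>lborel) = (\<integral>\<^sup>+x. F x \<partial>(density (distr lborel borel (\<lambda>x. t + 1 *\<^sub>R x)) (\<lambda>_. ennreal (\<bar>1::real\<bar> ^ DIM('a)))))"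
    using arg_cong[OF lborel_affine[of 1 t], of "\<lambda>M. integral\<^sup>N M F"] by (simp add: ennreal_power)
  also have "\<dots> = (\<integral>\<^sup>+x. F x \<partial>(distr lborel borel (\<lambda>x. t + x)))"
    by (simp add: density_1)
  also have "\<dots> = (\<integral>\<^sup>+x. F (t + x) \<partial>lborel)"
    by (subst nn_integral_distr) auto
  finally show ?thesis .
qed

lemma lborel_pair_nn:
  fixes G :: "real \<times> 'a::euclidean_space \<Rightarrow> ennreal"
  assumes G[measurable]: "G \<in> borel_measurable borel"
  shows "(\<integral>\<^sup>+z. G z \<partial>lborel) = (\<integral>\<^sup>+s. \<integral>\<^sup>+y. G (s, y) \<partial>lborel \<partial>lborel)"
proof -
  have "(\<integral>\<^sup>+z. G z \<partial>(lborel :: (real \<times> 'a) measure)) = (\<integral>\<^sup>+z. G z \<partial>(lborel \<Otimes>\<^sub>M lborel))"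
    by (simp only: lborel_prod)
  also have "\<dots> = (\<integral>\<^sup>+s. \<integral>\<^sup>+y. G (s, y) \<partial>lborel \<partial>lborel)"
  proof (rule lborel.nn_integral_fst[symmetric])
    show "G \<in> borel_measurable (lborel \<Otimes>\<^sub>M lborel)" by (simp only: lborel_prod) measurable
  qed
  finally show ?thesis .
qed



lemma E_meas:
  fixes g :: "'a::euclidean_space \<Rightarrow> complex"
  assumes g[measurable]: "g \<in> borel_measurable borel"
  shows "ext_op g \<in> borel_measurable borel"
proof -
  define F where "F = (\<lambda>(z::real\<times>'a) \<xi>. exp (\<i> * complex_of_real (fst z * (norm \<xi>)\<^sup>2 + inner (snd z) \<xi>)) * g \<xi>)"
  have "case_prod F \<in> borel_measurable (lborel \<Otimes>\<^sub>M lborel)"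
    unfolding F_def by (simp only: lborel_prod measurable_lborel2 borel_prod[symmetric]) measurable
  then have "(\<lambda>z. \<integral>\<xi>. F z \<xi> \<partial>lborel) \<in> borel_measurable lborel"
    by (rule lborel.borel_measurable_lebesgue_integral)
  moreover have "ext_op g = (\<lambda>z. \<integral>\<xi>. F z \<xi> \<partial>lborel)"
    unfolding ext_op_def F_def by (auto simp: fun_eq_iff)
  ultimately show ?thesis by simp
qed

lemma norm_exp_i: "norm (exp (\<i> * complex_of_real r)) = 1"
  by (simp add: norm_exp_i_times)

lemma E_integrable:
  fixes g :: "'a::euclidean_space \<Rightarrow> complex"
  assumes g: "integrable lborel g"
  shows "integrable lborel (\<lambda>\<xi>. exp (\<i> * complex_of_real (t * (norm \<xi>)\<^sup>2 + inner x \<xi>)) * g \<xi>)"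
proof (rule Bochner_Integration.integrable_bound[OF g])
  have [measurable]: "g \<in> borel_measurable borel" using borel_measurable_integrable[OF g] by simp
  show "(\<lambda>\<xi>. exp (\<i> * complex_of_real (t * (norm \<xi>)\<^sup>2 + inner x \<xi>)) * g \<xi>) \<in> borel_measurable lborel"
    by measurable
  show "AE \<xi> in lborel. norm (exp (\<i> * complex_of_real (t * (norm \<xi>)\<^sup>2 + inner x \<xi>)) * g \<xi>) \<le> norm (g \<xi>)"
    by (intro AE_I2) (simp add: norm_mult norm_exp_i)
qed

lemma E_diff:
  fixes g1 g2 :: "'a::euclidean_space \<Rightarrow> complex"
  assumes "integrable lborel g1" "integrable lborel g2"
  shows "ext_op (\<lambda>\<xi>. g1 \<xi> - g2 \<xi>) z = ext_op g1 z - ext_op g2 z"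
proof -
  obtain t x where z: "z = (t, x)" by (cases z)
  show ?thesis unfolding z ext_op_def
    using E_integrable[OF assms(1), of t x] E_integrable[OF assms(2), of t x]
    by (simp add: right_diff_distrib)
qed

lemma E_tendsto:
  fixes g :: "'a::euclidean_space \<Rightarrow> complex"
  assumes g: "integrable lborel g" and Z: "Z \<longlonglongrightarrow> z"
  shows "(\<lambda>n. ext_op g (Z n)) \<longlonglongrightarrow> ext_op g z"
proof -
  have [measurable]: "g \<in> borel_measurable borel" using borel_measurable_integrable[OF g] by simp
  define F where "F = (\<lambda>z \<xi>. exp (\<i> * complex_of_real (fst z * (norm \<xi>)\<^sup>2 + inner (snd z) \<xi>)) * g \<xi>)"
  have eq: "ext_op g w = (\<integral>\<xi>. F w \<xi> \<partial>lborel)" for w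
    unfolding ext_op_def F_def by (cases w) auto
  have "(\<lambda>n. \<integral>\<xi>. F (Z n) \<xi> \<partial>lborel) \<longlonglongrightarrow> (\<integral>\<xi>. F z \<xi> \<partial>lborel)"
  proof (rule integral_dominated_convergence[where w="\<lambda>\<xi>. norm (g \<xi>)"])
    show "F z \<in> borel_measurable lborel" unfolding F_def by measurable
    show "F (Z i) \<in> borel_measurable lborel" for i unfolding F_def by measurable
    show "integrable lborel (\<lambda>\<xi>. norm (g \<xi>))" using g by simp
    show "AE \<xi> in lborel. norm (F (Z i) \<xi>) \<le> norm (g \<xi>)" for i
      unfolding F_def by (intro AE_I2) (simp add: norm_mult norm_exp_i)
    show "AE \<xi> in lborel. (\<lambda>i. F (Z i) \<xi>) \<longlonglongrightarrow> F z \<xi>"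
    proof (intro AE_I2)
      fix \<xi>
      show "(\<lambda>i. F (Z i) \<xi>) \<longlonglongrightarrow> F z \<xi>" unfolding F_def
        using Z by (intro tendsto_intros)
    qed
  qed
  then show ?thesis by (simp add: eq)
qed

lemma S_eq:
  fixes g :: "'a::euclidean_space \<Rightarrow> complex"
  shows "ext_op_shift \<tau>0 \<xi>0 g (t, x) =
    exp (\<i> * complex_of_real (t * ((norm \<xi>0)\<^sup>2 + \<tau>0))) * ext_op g (t, x - (2 * t) *\<^sub>R \<xi>0)"
proof -
  have pt: "exp (\<i> * complex_of_real (t * ((norm (\<xi> - \<xi>0))\<^sup>2 + \<tau>0) + inner x \<xi>)) * g \<xi>
      = exp (\<i> * complex_of_real (t * ((norm \<xi>0)\<^sup>2 + \<tau>0))) *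
        (exp (\<i> * complex_of_real (t * (norm \<xi>)\<^sup>2 + inner (x - (2 * t) *\<^sub>R \<xi>0) \<xi>)) * g \<xi>)" for \<xi>
  proof -
    have "t * ((norm (\<xi> - \<xi>0))\<^sup>2 + \<tau>0) + inner x \<xi>
        = t * ((norm \<xi>0)\<^sup>2 + \<tau>0) + (t * (norm \<xi>)\<^sup>2 + inner (x - (2 * t) *\<^sub>R \<xi>0) \<xi>)"
      by (simp add: power2_norm_eq_inner inner_diff_left inner_diff_right inner_commute algebra_simps)
    then have "\<i> * complex_of_real (t * ((norm (\<xi> - \<xi>0))\<^sup>2 + \<tau>0) + inner x \<xi>)
       = \<i> * complex_of_real (t * ((norm \<xi>0)\<^sup>2 + \<tau>0)) + \<i> * complex_of_real (t * (norm \<xi>)\<^sup>2 + inner (x - (2 * t) *\<^sub>R \<xi>0) \<xi>)"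
      by (simp only: of_real_add distrib_left)
    then show ?thesis by (simp only: exp_add mult.assoc)
  qed
  show ?thesis unfolding ext_op_shift_def ext_op_def prod.case pt by (rule integral_mult_right_zero)
qed

lemma E_scale:
  fixes h :: "'a::euclidean_space \<Rightarrow> complex" and l a :: real
  assumes h[measurable]: "h \<in> borel_measurable borel" and l: "0 < l"
  shows "ext_op (\<lambda>\<xi>. complex_of_real a * h (l *\<^sub>R \<xi>)) (t, x) =
    complex_of_real (a / l ^ DIM('a)) * ext_op h (t / l\<^sup>2, (1 / l) *\<^sub>R x)"
proof -
  define F where "F = (\<lambda>\<xi>. exp (\<i> * complex_of_real (t * (norm \<xi>)\<^sup>2 + inner x \<xi>)) * (complex_of_real a * h (l *\<^sub>R \<xi>)))"
  have [measurable]: "F \<in> borel_measurable borel" unfolding F_def by measurable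
  have "ext_op (\<lambda>\<xi>. complex_of_real a * h (l *\<^sub>R \<xi>)) (t, x) = (\<integral>\<xi>. F \<xi> \<partial>lborel)"
    unfolding ext_op_def F_def by simp
  also have "\<dots> = (\<bar>1 / l\<bar> ^ DIM('a)) *\<^sub>R (\<integral>\<xi>. F ((1 / l) *\<^sub>R \<xi>) \<partial>lborel)"
    using l by (intro lborel_scale_integral) auto
  also have "(\<lambda>\<xi>. F ((1 / l) *\<^sub>R \<xi>)) = (\<lambda>\<xi>. complex_of_real a *
       (exp (\<i> * complex_of_real (t / l\<^sup>2 * (norm \<xi>)\<^sup>2 + inner ((1 / l) *\<^sub>R x) \<xi>)) * h \<xi>))"
  proof
    fix \<xi>
    have "t * (norm ((1 / l) *\<^sub>R \<xi>))\<^sup>2 + inner x ((1 / l) *\<^sub>R \<xi>) = t / l\<^sup>2 * (norm \<xi>)\<^sup>2 + inner ((1 / l) *\<^sub>R x) \<xi>"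
      using l by (simp add: power2_eq_square field_simps)
    then show "F ((1 / l) *\<^sub>R \<xi>) = complex_of_real a *
       (exp (\<i> * complex_of_real (t / l\<^sup>2 * (norm \<xi>)\<^sup>2 + inner ((1 / l) *\<^sub>R x) \<xi>)) * h \<xi>)"
      unfolding F_def using l by simp
  qed
  also have "(\<bar>1 / l\<bar> ^ DIM('a)) *\<^sub>R (\<integral>\<xi>. complex_of_real a *
       (exp (\<i> * complex_of_real (t / l\<^sup>2 * (norm \<xi>)\<^sup>2 + inner ((1 / l) *\<^sub>R x) \<xi>)) * h \<xi>) \<partial>lborel)
     = complex_of_real (a / l ^ DIM('a)) * ext_op h (t / l\<^sup>2, (1 / l) *\<^sub>R x)"
    unfolding ext_op_def using l by (simp add: scaleR_conv_of_real power_divide)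
  finally show ?thesis .
qed



lemma pair_scale_nn:
  fixes G :: "real \<times> 'a::euclidean_space \<Rightarrow> ennreal" and l :: real
  assumes G[measurable]: "G \<in> borel_measurable borel" and l: "0 < l"
  shows "(\<integral>\<^sup>+z. G (fst z / l\<^sup>2, (1 / l) *\<^sub>R snd z) \<partial>lborel) = ennreal (l ^ (DIM('a) + 2)) * (\<integral>\<^sup>+z. G z \<partial>lborel)"
proof -
  have [measurable]: "G \<in> borel_measurable (borel \<Otimes>\<^sub>M borel)" by (simp only: borel_prod) (rule G)
  have m2: "(\<lambda>z. G (fst z / l\<^sup>2, (1 / l) *\<^sub>R snd z)) \<in> borel_measurable borel"
    by (simp only: borel_prod[symmetric]) measurable
  have inner: "(\<integral>\<^sup>+y. G (a, (1 / l) *\<^sub>R y) \<partial>lborel) = ennreal (l ^ DIM('a)) * (\<integral>\<^sup>+y. G (a, y) \<partial>lborel)" for a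
  proof -
    have "(\<integral>\<^sup>+y. G (a, (1 / l) *\<^sub>R y) \<partial>lborel) = ennreal (\<bar>l\<bar> ^ DIM('a)) * (\<integral>\<^sup>+y. G (a, (1 / l) *\<^sub>R (l *\<^sub>R y)) \<partial>lborel)"
      using l by (intro lborel_scale_nn) auto
    then show ?thesis using l by simp
  qed
  have mi: "(\<lambda>s. \<integral>\<^sup>+y. G (s, y) \<partial>lborel) \<in> borel_measurable borel"
  proof -
    have "(\<lambda>s. \<integral>\<^sup>+y. G (s, y) \<partial>lborel) \<in> borel_measurable lborel"
      by (rule lborel.borel_measurable_nn_integral_fst) (simp only: lborel_prod, measurable)
    then show ?thesis by simp
  qed
  have "(\<integral>\<^sup>+z. G (fst z / l\<^sup>2, (1 / l) *\<^sub>R snd z) \<partial>lborel) = (\<integral>\<^sup>+s. \<integral>\<^sup>+y. G (s / l\<^sup>2, (1 / l) *\<^sub>R y) \<partial>lborel \<partial>lborel)"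
    using lborel_pair_nn[OF m2] by (simp only: fst_conv snd_conv)
  also have "\<dots> = (\<integral>\<^sup>+s. ennreal (l ^ DIM('a)) * (\<integral>\<^sup>+y. G (s / l\<^sup>2, y) \<partial>lborel) \<partial>lborel)"
    by (simp only: inner)
  also have "\<dots> = ennreal (l ^ DIM('a)) * (\<integral>\<^sup>+s. (\<integral>\<^sup>+y. G (s / l\<^sup>2, y) \<partial>lborel) \<partial>lborel)"
    using mi by (intro nn_integral_cmult) measurable
  also have "(\<integral>\<^sup>+s. (\<integral>\<^sup>+y. G (s / l\<^sup>2, y) \<partial>lborel) \<partial>lborel)
      = ennreal \<bar>l\<^sup>2\<bar> * (\<integral>\<^sup>+s. (\<integral>\<^sup>+y. G ((0 + l\<^sup>2 * s) / l\<^sup>2, y) \<partial>lborel) \<partial>lborel)"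
    using l mi by (intro nn_integral_real_affine) measurable
  also have "(\<lambda>s. (\<integral>\<^sup>+y. G ((0 + l\<^sup>2 * s) / l\<^sup>2, y) \<partial>lborel)) = (\<lambda>s. (\<integral>\<^sup>+y. G (s, y) \<partial>lborel))"
    using l by simp
  also have "(\<integral>\<^sup>+s. (\<integral>\<^sup>+y. G (s, y) \<partial>lborel) \<partial>lborel) = (\<integral>\<^sup>+z. G z \<partial>lborel)"
    using lborel_pair_nn[OF G] by (simp only:)
  also have "ennreal \<bar>l\<^sup>2\<bar> = ennreal (l\<^sup>2)" by simp
  finally show ?thesis using l
    by (simp only: ennreal_mult'[symmetric] mult.assoc[symmetric] power_add) (simp add: mult.commute power2_eq_square ennreal_mult ennreal_power)
qed
lemma pair_shear_nn:
  fixes G :: "real \<times> 'a::euclidean_space \<Rightarrow> ennreal" and v :: 'a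
  assumes G[measurable]: "G \<in> borel_measurable borel"
  shows "(\<integral>\<^sup>+z. G (fst z, snd z - fst z *\<^sub>R v) \<partial>lborel) = (\<integral>\<^sup>+z. G z \<partial>lborel)"
proof -
  have [measurable]: "G \<in> borel_measurable (borel \<Otimes>\<^sub>M borel)" by (simp only: borel_prod) (rule G)
  have m2: "(\<lambda>z. G (fst z, snd z - fst z *\<^sub>R v)) \<in> borel_measurable borel"
    by (simp only: borel_prod[symmetric]) measurable
  have inner: "(\<integral>\<^sup>+y. G (s, y - s *\<^sub>R v) \<partial>lborel) = (\<integral>\<^sup>+y. G (s, y) \<partial>lborel)" for s
  proof -
    have "(\<integral>\<^sup>+y. G (s, y - s *\<^sub>R v) \<partial>lborel) = (\<integral>\<^sup>+y. G (s, (s *\<^sub>R v + y) - s *\<^sub>R v) \<partial>lborel)"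
      by (intro lborel_transl_nn) measurable
    then show ?thesis by simp
  qed
  have "(\<integral>\<^sup>+z. G (fst z, snd z - fst z *\<^sub>R v) \<partial>lborel) = (\<integral>\<^sup>+s. \<integral>\<^sup>+y. G (s, y - s *\<^sub>R v) \<partial>lborel \<partial>lborel)"
    using lborel_pair_nn[OF m2] by (simp only: fst_conv snd_conv)
  also have "\<dots> = (\<integral>\<^sup>+s. \<integral>\<^sup>+y. G (s, y) \<partial>lborel \<partial>lborel)" by (simp only: inner)
  also have "\<dots> = (\<integral>\<^sup>+z. G z \<partial>lborel)" using lborel_pair_nn[OF G] by (simp only:)
  finally show ?thesis .
qed



lemma nn_eq_Lp:
  assumes u: "u \<in> borel_measurable lborel" and v: "in_Lp r v" and c: "0 \<le> c"
    and eq: "(\<integral>\<^sup>+z. ennreal (norm (u z) powr r) \<partial>lborel) = ennreal c * (\<integral>\<^sup>+z. ennreal (norm (v z) powr r) \<partial>lborel)"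
  shows "in_Lp r u" "J r u = c * J r v"
proof -
  have "(\<integral>\<^sup>+z. ennreal (norm (u z) powr r) \<partial>lborel) = ennreal (c * J r v)"
    using eq nn_J[OF v] c J_nonneg[of r v] by (simp add: ennreal_mult)
  then show ui: "in_Lp r u" using u unfolding in_Lp_def by simp
  show "J r u = c * J r v"
    using nn_J[OF ui] \<open>(\<integral>\<^sup>+z. _ \<partial>lborel) = ennreal (c * J r v)\<close> J_nonneg[of r u] J_nonneg[of r v] c
    by simp
qed

definition Psh :: "real \<Rightarrow> 'a::euclidean_space \<Rightarrow> real \<Rightarrow> (real \<times> 'a \<Rightarrow> complex) \<Rightarrow> real \<times> 'a \<Rightarrow> complex" where
  "Psh \<theta> \<xi>0 l w = (\<lambda>z. exp (\<i> * complex_of_real (l\<^sup>2 * fst z * \<theta>)) * w (fst z, snd z - (2 * l * fst z) *\<^sub>R \<xi>0))"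

definition Vop :: "real \<Rightarrow> 'a::euclidean_space \<Rightarrow> real \<Rightarrow> (real \<times> 'a \<Rightarrow> complex) \<Rightarrow> real \<times> 'a \<Rightarrow> complex" where
  "Vop \<theta> \<xi>0 l w = (\<lambda>z. w z + Psh \<theta> \<xi>0 l w z)"

lemma Psh_meas:
  assumes w[measurable]: "w \<in> borel_measurable borel"
  shows "Psh \<theta> \<xi>0 l w \<in> borel_measurable borel"
proof -
  have [measurable]: "w \<in> borel_measurable (borel \<Otimes>\<^sub>M borel)" by (simp only: borel_prod) (rule w)
  show ?thesis unfolding Psh_def by (simp only: borel_prod[symmetric]) measurable
qed

lemma Psh_Lp:
  assumes w: "in_Lp r w" and r: "0 < r"
  shows "in_Lp r (Psh \<theta> \<xi>0 l w)" "LQ r (Psh \<theta> \<xi>0 l w) = LQ r w"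
proof -
  have wm[measurable]: "w \<in> borel_measurable borel" using in_Lp_meas[OF w] by simp
  define G where "G = (\<lambda>z. ennreal (norm (w z) powr r))"
  have Gm: "G \<in> borel_measurable borel" unfolding G_def by measurable
  have "(\<integral>\<^sup>+z. ennreal (norm (Psh \<theta> \<xi>0 l w z) powr r) \<partial>lborel) = (\<integral>\<^sup>+z. G (fst z, snd z - fst z *\<^sub>R ((2 * l) *\<^sub>R \<xi>0)) \<partial>lborel)"
    unfolding Psh_def G_def by (simp add: norm_mult norm_exp_i mult.assoc mult.commute mult.left_commute)
  also have "\<dots> = (\<integral>\<^sup>+z. G z \<partial>lborel)" by (rule pair_shear_nn[OF Gm])
  finally have eq: "(\<integral>\<^sup>+z. ennreal (norm (Psh \<theta> \<xi>0 l w z) powr r) \<partial>lborel) = ennreal 1 * (\<integral>\<^sup>+z. ennreal (norm (w z) powr r) \<partial>lborel)"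
    unfolding G_def by simp
  have pm: "Psh \<theta> \<xi>0 l w \<in> borel_measurable lborel" using Psh_meas[OF wm] by simp
  show "in_Lp r (Psh \<theta> \<xi>0 l w)" using nn_eq_Lp(1)[OF pm w _ eq] by simp
  have "J r (Psh \<theta> \<xi>0 l w) = J r w" using nn_eq_Lp(2)[OF pm w _ eq] by simp
  then show "LQ r (Psh \<theta> \<xi>0 l w) = LQ r w" by (simp add: LQ_def)
qed

lemma Vop_Lp:
  assumes w: "in_Lp r w" and r: "1 \<le> r"
  shows "in_Lp r (Vop \<theta> \<xi>0 l w)" "LQ r (Vop \<theta> \<xi>0 l w) \<le> 2 * LQ r w"
proof -
  have r0: "0 < r" using r by simp
  note P = Psh_Lp[OF w r0, of \<theta> \<xi>0 l]
  show "in_Lp r (Vop \<theta> \<xi>0 l w)" unfolding Vop_def using minkowski(1)[OF r w P(1)] .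
  show "LQ r (Vop \<theta> \<xi>0 l w) \<le> 2 * LQ r w" unfolding Vop_def using minkowski(2)[OF r w P(1)] P(2) by simp
qed

lemma Vop_diff: "Vop \<theta> \<xi>0 l w1 z - Vop \<theta> \<xi>0 l w2 z = Vop \<theta> \<xi>0 l (\<lambda>z. w1 z - w2 z) z"
  unfolding Vop_def Psh_def by (simp add: algebra_simps)

lemma lpnorm_nn_cong:
  assumes "(\<integral>\<^sup>+z. ennreal (norm (u z) powr r) \<partial>lborel) = (\<integral>\<^sup>+z. ennreal (norm (v z) powr r) \<partial>lborel)"
  shows "lpnorm r u = lpnorm r v"
  unfolding lpnorm_def using assms by simp



lemma T_scale_pt:
  fixes h :: "'a::euclidean_space \<Rightarrow> complex" and l a :: real
  assumes h[measurable]: "h \<in> borel_measurable borel" and l: "0 < l"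
  shows "ext_op (\<lambda>\<xi>. complex_of_real a * h (l *\<^sub>R \<xi>)) z + ext_op_shift \<tau>0 \<xi>0 (\<lambda>\<xi>. complex_of_real a * h (l *\<^sub>R \<xi>)) z
    = complex_of_real (a / l ^ DIM('a)) * Vop ((norm \<xi>0)\<^sup>2 + \<tau>0) \<xi>0 l (ext_op h) (fst z / l\<^sup>2, (1 / l) *\<^sub>R snd z)"
proof -
  obtain t x where z: "z = (t, x)" by (cases z)
  have e1: "(1 / l) *\<^sub>R (x - (2 * t) *\<^sub>R \<xi>0) = (1 / l) *\<^sub>R x - (2 * l * (t / l\<^sup>2)) *\<^sub>R \<xi>0"
    using l by (simp add: scaleR_diff_right power2_eq_square)
  have e2: "l\<^sup>2 * (t / l\<^sup>2) = t" using l by simp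
  have e3: "l * (t * 2) / l\<^sup>2 = t * 2 / l" using l by (simp add: power2_eq_square)
  show ?thesis unfolding z
    by (simp add: S_eq E_scale[OF h l] Vop_def Psh_def e1 e2 e3 algebra_simps)
qed

lemma exponent_id:
  fixes p p' q d :: real
  assumes conj: "1 / p + 1 / p' = 1" and q: "q = (d + 2) / d * p'" and d: "0 < d" and p: "1 < p"
  shows "q * (d / p - d) + (d + 2) = 0"
proof -
  have p0: "p' \<noteq> 0" using conj p by auto
  have "p' * (1 / p + 1 / p') = p'" using conj by simp
  then have pp: "p' / p + 1 = p'" using p0 by (simp add: distrib_left)
  have "q * (d / p - d) = ((d + 2) / d * p') * (d * (1 / p - 1))" using q by (simp add: right_diff_distrib)
  also have "\<dots> = (d + 2) * (p' / p - p')" using d by (simp add: right_diff_distrib)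
  finally have "q * (d / p - d) = (d + 2) * (p' / p - p')" .
  also have "p' / p - p' = -1" using pp by simp
  also have "(d + 2) * -1 = - (d + 2)" by simp
  finally show ?thesis by simp
qed

lemma T_scale_nn:
  fixes h :: "'a::euclidean_space \<Rightarrow> complex" and l a r :: real
  assumes h[measurable]: "h \<in> borel_measurable borel" and l: "0 < l" and r: "0 < r"
    and expo: "r * (e - real DIM('a)) + (real DIM('a) + 2) = 0"
  shows "(\<integral>\<^sup>+z. ennreal (norm (ext_op (\<lambda>\<xi>. complex_of_real (l powr e) * h (l *\<^sub>R \<xi>)) z
          + ext_op_shift \<tau>0 \<xi>0 (\<lambda>\<xi>. complex_of_real (l powr e) * h (l *\<^sub>R \<xi>)) z) powr r) \<partial>lborel)
     = (\<integral>\<^sup>+z. ennreal (norm (Vop ((norm \<xi>0)\<^sup>2 + \<tau>0) \<xi>0 l (ext_op h) z) powr r) \<partial>lborel)"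
proof -
  define W where "W = Vop ((norm \<xi>0)\<^sup>2 + \<tau>0) \<xi>0 l (ext_op h)"
  have Wm: "W \<in> borel_measurable borel" unfolding W_def Vop_def
    using Psh_meas[OF E_meas[OF h]] E_meas[OF h] by measurable
  define G where "G = (\<lambda>z. ennreal (norm (W z) powr r))"
  have Gm: "G \<in> borel_measurable borel" unfolding G_def using Wm by measurable
  define c where "c = l powr e / l ^ DIM('a)"
  have c0: "0 \<le> c" unfolding c_def using l by simp
  have "(\<integral>\<^sup>+z. ennreal (norm (ext_op (\<lambda>\<xi>. complex_of_real (l powr e) * h (l *\<^sub>R \<xi>)) z
          + ext_op_shift \<tau>0 \<xi>0 (\<lambda>\<xi>. complex_of_real (l powr e) * h (l *\<^sub>R \<xi>)) z) powr r) \<partial>lborel)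
     = (\<integral>\<^sup>+z. ennreal (c powr r) * G (fst z / l\<^sup>2, (1 / l) *\<^sub>R snd z) \<partial>lborel)"
  proof (intro nn_integral_cong)
    fix z :: "real \<times> 'a"
    have "ext_op (\<lambda>\<xi>. complex_of_real (l powr e) * h (l *\<^sub>R \<xi>)) z
          + ext_op_shift \<tau>0 \<xi>0 (\<lambda>\<xi>. complex_of_real (l powr e) * h (l *\<^sub>R \<xi>)) z
        = complex_of_real c * W (fst z / l\<^sup>2, (1 / l) *\<^sub>R snd z)"
      unfolding T_scale_pt[OF h l] c_def W_def ..
    moreover have "norm (complex_of_real c * W (fst z / l\<^sup>2, (1 / l) *\<^sub>R snd z)) powr r
        = c powr r * norm (W (fst z / l\<^sup>2, (1 / l) *\<^sub>R snd z)) powr r"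
      using c0 by (simp add: norm_mult powr_mult)
    ultimately show "ennreal (norm (ext_op (\<lambda>\<xi>. complex_of_real (l powr e) * h (l *\<^sub>R \<xi>)) z
          + ext_op_shift \<tau>0 \<xi>0 (\<lambda>\<xi>. complex_of_real (l powr e) * h (l *\<^sub>R \<xi>)) z) powr r)
        = ennreal (c powr r) * G (fst z / l\<^sup>2, (1 / l) *\<^sub>R snd z)"
      unfolding G_def by (simp add: ennreal_mult')
  qed
  also have "\<dots> = ennreal (c powr r) * (\<integral>\<^sup>+z. G (fst z / l\<^sup>2, (1 / l) *\<^sub>R snd z) \<partial>lborel)"
  proof (rule nn_integral_cmult)
    have [measurable]: "G \<in> borel_measurable (borel \<Otimes>\<^sub>M borel)" by (simp only: borel_prod) (rule Gm)
    show "(\<lambda>z. G (fst z / l\<^sup>2, (1 / l) *\<^sub>R snd z)) \<in> borel_measurable lborel"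
      by (simp only: measurable_lborel2 borel_prod[symmetric]) measurable
  qed
  also have "\<dots> = ennreal (c powr r) * (ennreal (l ^ (DIM('a) + 2)) * (\<integral>\<^sup>+z. G z \<partial>lborel))"
    by (simp add: pair_scale_nn[OF Gm l])
  also have "c powr r * l ^ (DIM('a) + 2) = 1"
  proof -
    have cl: "c = l powr (e - real DIM('a))" unfolding c_def using l by (simp add: powr_diff powr_realpow)
    then have "c powr r * l ^ (DIM('a) + 2) = l powr (r * (e - real DIM('a))) * l powr (real DIM('a) + 2)"
    proof -
      have "l ^ (DIM('a) + 2) = l powr (real DIM('a) + 2)"
        using l powr_realpow[of l "DIM('a) + 2"] by (simp add: add.commute)
      moreover have "c powr r = l powr (r * (e - real DIM('a)))"
        using l cl by (simp add: powr_powr mult.commute)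
      ultimately show ?thesis by simp
    qed
    also have "\<dots> = l powr (r * (e - real DIM('a)) + (real DIM('a) + 2))" by (simp add: powr_add)
    also have "\<dots> = 1" using expo l by simp
    finally show ?thesis .
  qed
  then have "ennreal (c powr r) * (ennreal (l ^ (DIM('a) + 2)) * (\<integral>\<^sup>+z. G z \<partial>lborel)) = (\<integral>\<^sup>+z. G z \<partial>lborel)"
    using l by (simp add: mult.assoc[symmetric] ennreal_mult'[symmetric])
  finally show ?thesis unfolding G_def W_def .
qed



lemma trunc_integrable:
  assumes g: "in_Lp p g" and p: "1 \<le> p"
  shows "integrable lborel (trunc \<rho> g)"
proof -
  have gm[measurable]: "g \<in> borel_measurable borel" using in_Lp_meas[OF g] by simp
  have tm: "trunc \<rho> g \<in> borel_measurable lborel" unfolding trunc_def by measurable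
  show ?thesis
  proof (rule Bochner_Integration.integrable_bound[OF _ tm])
    show "integrable lborel (\<lambda>\<xi>. indicator (cball 0 \<rho>) \<xi> + norm (g \<xi>) powr p :: real)"
      using in_Lp_integrable[OF g]
      by (intro Bochner_Integration.integrable_add integrable_real_indicator) (use emeasure_lborel_cball_finite[of 0 \<rho>] in \<open>auto simp: infinity_ennreal_def\<close>)
    show "AE \<xi> in lborel. norm (trunc \<rho> g \<xi>) \<le> norm (indicator (cball 0 \<rho>) \<xi> + norm (g \<xi>) powr p :: real)"
    proof (intro AE_I2)
      fix \<xi> :: 'a
      have 1: "norm (g \<xi>) \<le> 1 + norm (g \<xi>) powr p"
      proof (cases "norm (g \<xi>) \<le> 1")
        case True
        have "0 \<le> norm (g \<xi>) powr p" by simp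
        with True show ?thesis by linarith
      next
        case False
        then have "norm (g \<xi>) powr 1 \<le> norm (g \<xi>) powr p" using p by (intro powr_mono) auto
        then show ?thesis using False by simp
      qed
      show "norm (trunc \<rho> g \<xi>) \<le> norm (indicator (cball 0 \<rho>) \<xi> + norm (g \<xi>) powr p :: real)"
        unfolding trunc_def using 1 by (auto simp: indicator_def dist_norm)
    qed
  qed
qed

lemma Lim_eventually_const:
  assumes "eventually (\<lambda>R. F R = c) (at_top :: real filter)"
  shows "Lim at_top F = c"
proof (rule tendsto_Lim)
  show "\<not> trivial_limit (at_top :: real filter)" by simp
  show "(F \<longlongrightarrow> c) at_top" using assms by (simp add: tendsto_eventually)
qed

locale setting =
  fixes p p' q :: real and f :: "'a::euclidean_space \<Rightarrow> complex"
    and \<tau>0 :: real and \<xi>0 :: 'a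
  assumes p_gt1: "1 < p"
    and conj: "1 / p + 1 / p' = 1"
    and q_def: "q = (real DIM('a) + 2) / real DIM('a) * p'"
    and q_gt_p: "q > p"
    and A_fin: "A_const p q TYPE('a) < \<infinity>"
    and f_Lp: "in_Lp p f"
    and f_nz: "lpnorm p f \<noteq> 0"
    and extremizer: "ext_norm q ext_op f = A_const p q TYPE('a) * lpnorm p f"
begin

definition "Ar = enn2real (A_const p q TYPE('a))"

lemma q1: "1 < q" using p_gt1 q_gt_p by simp

lemma A_eq: "A_const p q TYPE('a) = ennreal Ar"
  unfolding Ar_def using A_fin by (cases "A_const p q TYPE('a)") auto

lemma Ar_nonneg: "0 \<le> Ar" unfolding Ar_def by simp

lemma fm[measurable]: "f \<in> borel_measurable borel" using in_Lp_meas[OF f_Lp] by simp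

lemma A_bound:
  fixes g :: "'a \<Rightarrow> complex"
  assumes g: "in_Lp p g" and gi: "integrable lborel g" and supp: "\<And>\<xi>. R0 < norm \<xi> \<Longrightarrow> g \<xi> = 0"
  shows "in_Lp q (ext_op g)" "LQ q (ext_op g) \<le> Ar * LQ p g"
proof -
  have gm[measurable]: "g \<in> borel_measurable borel" using in_Lp_meas[OF g] by simp
  have Em: "ext_op g \<in> borel_measurable lborel" using E_meas[OF gm] by simp
  have en: "ext_norm q ext_op g = lpnorm q (ext_op g)"
    unfolding ext_norm_def
  proof (rule Lim_eventually_const)
    show "\<forall>\<^sub>F R in at_top. lpnorm q (ext_op (trunc R g)) = lpnorm q (ext_op g)"
      using eventually_ge_at_top[of R0]
    proof eventually_elim
      case (elim R)
      then have "trunc R g = g" unfolding trunc_def using supp by (auto simp: fun_eq_iff)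
      then show ?case by simp
    qed
  qed
  have "in_Lp q (ext_op g) \<and> LQ q (ext_op g) \<le> Ar * LQ p g"
  proof (cases "LQ p g = 0")
    case True
    then have "AE \<xi> in lborel. g \<xi> = 0" using LQ_zero_AE[OF g] p_gt1 by simp
    then have E0: "ext_op g z = 0" for z
    proof -
      assume ae: "AE \<xi> in lborel. g \<xi> = 0"
      obtain t x where z: "z = (t, x)" by (cases z)
      show ?thesis unfolding z ext_op_def using ae
        by (auto intro!: integral_eq_zero_AE elim!: AE_mp)
    qed
    have "ext_op g = (\<lambda>z. 0)" using E0 by auto
    moreover have "in_Lp q (\<lambda>z::real\<times>'a. 0)" unfolding in_Lp_def using q1 by simp
    moreover have "LQ q (\<lambda>z::real\<times>'a. 0) = 0" unfolding LQ_def J_def using q1 by simp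
    ultimately show ?thesis using True by simp
  next
    case False
    then have lp: "lpnorm p g \<noteq> 0" using lpnorm_LQ[OF g] LQ_nonneg[of p g] by simp
    have "ext_norm q ext_op g / lpnorm p g \<le> A_const p q TYPE('a)"
      unfolding A_const_def using g lp by (intro SUP_upper) auto
    then have le: "lpnorm q (ext_op g) / ennreal (LQ p g) \<le> ennreal Ar"
      using en lpnorm_LQ[OF g] A_eq by simp
    have ne: "ennreal (LQ p g) \<noteq> 0" "ennreal (LQ p g) < top" using False LQ_nonneg[of p g] by auto
    have "lpnorm q (ext_op g) = (lpnorm q (ext_op g) / ennreal (LQ p g)) * ennreal (LQ p g)"
      using ne by (simp add: ennreal_divide_times)
    also have "\<dots> \<le> ennreal Ar * ennreal (LQ p g)" using le by (rule mult_right_mono) simp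
    finally have le2: "lpnorm q (ext_op g) \<le> ennreal (Ar * LQ p g)"
      using Ar_nonneg LQ_nonneg[of p g] by (simp add: ennreal_mult)
    define I where "I = (\<integral>\<^sup>+ z. ennreal (norm (ext_op g z) powr q) \<partial>lborel)"
    have "I \<noteq> \<infinity>"
    proof
      assume "I = \<infinity>"
      then have "lpnorm q (ext_op g) = \<infinity>" unfolding lpnorm_def I_def[symmetric] by simp
      then show False using le2 by (simp add: top_unique)
    qed
    then have inq: "in_Lp q (ext_op g)" unfolding in_Lp_def I_def[symmetric] using Em by (simp add: top.not_eq_extremum)
    then have "ennreal (LQ q (ext_op g)) \<le> ennreal (Ar * LQ p g)" using le2 lpnorm_LQ[OF inq] by simp
    then have "LQ q (ext_op g) \<le> Ar * LQ p g" using Ar_nonneg LQ_nonneg[of p g] by (simp add: ennreal_le_iff)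
    with inq show ?thesis by simp
  qed
  then show "in_Lp q (ext_op g)" "LQ q (ext_op g) \<le> Ar * LQ p g" by auto
qed

end



context setting begin

definition "kk \<rho> = trunc \<rho> f"
definition "tl' \<rho> = (\<lambda>\<xi>. if norm \<xi> \<le> \<rho> then 0 else f \<xi>)"
definition "\<delta> \<rho> = LQ p (tl' \<rho>)"
definition "uu \<rho> = ext_op (kk \<rho>)"
definition "\<theta> = (norm \<xi>0)\<^sup>2 + \<tau>0"
definition "gg l \<rho> = LQ q (Vop \<theta> \<xi>0 l (uu \<rho>))"
definition "hh \<rho> = LQ q (uu \<rho>)"

lemma p0: "0 < p" using p_gt1 by simp

lemma kk_int: "integrable lborel (kk \<rho>)"
  unfolding kk_def using trunc_integrable[OF f_Lp] p_gt1 by simp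

lemma kk_Lp: "in_Lp p (kk \<rho>)"
  unfolding kk_def
  by (rule in_Lp_mono(1)[OF f_Lp _ _ p0]) (auto simp: trunc_def)

lemma tl_Lp: "in_Lp p (tl' \<rho>)"
  unfolding tl'_def
  by (rule in_Lp_mono(1)[OF f_Lp _ _ p0]) auto

lemma delta_nonneg: "0 \<le> \<delta> \<rho>" unfolding \<delta>_def by (rule LQ_nonneg)

lemma kdiff:
  assumes "\<rho>0 \<le> \<rho>"
  shows "in_Lp p (\<lambda>\<xi>. kk \<rho> \<xi> - kk \<rho>0 \<xi>)" "integrable lborel (\<lambda>\<xi>. kk \<rho> \<xi> - kk \<rho>0 \<xi>)"
    "\<And>\<xi>. \<rho> < norm \<xi> \<Longrightarrow> kk \<rho> \<xi> - kk \<rho>0 \<xi> = 0"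
    "LQ p (\<lambda>\<xi>. kk \<rho> \<xi> - kk \<rho>0 \<xi>) \<le> \<delta> \<rho>0"
proof -
  have le: "norm (kk \<rho> \<xi> - kk \<rho>0 \<xi>) \<le> norm (tl' \<rho>0 \<xi>)" for \<xi>
    unfolding kk_def tl'_def trunc_def using assms by auto
  have m: "(\<lambda>\<xi>. kk \<rho> \<xi> - kk \<rho>0 \<xi>) \<in> borel_measurable lborel"
    unfolding kk_def trunc_def by measurable
  show "in_Lp p (\<lambda>\<xi>. kk \<rho> \<xi> - kk \<rho>0 \<xi>)" by (rule in_Lp_mono(1)[OF tl_Lp m le p0])
  show "LQ p (\<lambda>\<xi>. kk \<rho> \<xi> - kk \<rho>0 \<xi>) \<le> \<delta> \<rho>0" unfolding \<delta>_def by (rule in_Lp_mono(2)[OF tl_Lp m le p0])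
  show "integrable lborel (\<lambda>\<xi>. kk \<rho> \<xi> - kk \<rho>0 \<xi>)" using kk_int by auto
  show "\<And>\<xi>. \<rho> < norm \<xi> \<Longrightarrow> kk \<rho> \<xi> - kk \<rho>0 \<xi> = 0" unfolding kk_def trunc_def using assms by auto
qed

lemma uu_Lp: "in_Lp q (uu \<rho>)"
  unfolding uu_def by (rule A_bound(1)[OF kk_Lp kk_int, of \<rho>]) (auto simp: kk_def trunc_def)

lemma uu_diff:
  assumes "\<rho>0 \<le> \<rho>"
  shows "in_Lp q (\<lambda>z. uu \<rho> z - uu \<rho>0 z)" "LQ q (\<lambda>z. uu \<rho> z - uu \<rho>0 z) \<le> Ar * \<delta> \<rho>0"
proof -
  have eq: "(\<lambda>z. uu \<rho> z - uu \<rho>0 z) = ext_op (\<lambda>\<xi>. kk \<rho> \<xi> - kk \<rho>0 \<xi>)"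
    unfolding uu_def using E_diff[OF kk_int kk_int] by auto
  note kd = kdiff[OF assms]
  show "in_Lp q (\<lambda>z. uu \<rho> z - uu \<rho>0 z)" unfolding eq by (rule A_bound(1)[OF kd(1,2,3)])
  have "LQ q (\<lambda>z. uu \<rho> z - uu \<rho>0 z) \<le> Ar * LQ p (\<lambda>\<xi>. kk \<rho> \<xi> - kk \<rho>0 \<xi>)"
    unfolding eq by (rule A_bound(2)[OF kd(1,2,3)])
  also have "\<dots> \<le> Ar * \<delta> \<rho>0" using kd(4) Ar_nonneg by (rule mult_left_mono)
  finally show "LQ q (\<lambda>z. uu \<rho> z - uu \<rho>0 z) \<le> Ar * \<delta> \<rho>0" .
qed

lemma hh_diff:
  assumes "\<rho>0 \<le> \<rho>"
  shows "\<bar>hh \<rho> - hh \<rho>0\<bar> \<le> Ar * \<delta> \<rho>0"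
  unfolding hh_def using LQ_diff(2)[OF less_imp_le[OF q1] uu_Lp uu_Lp, of \<rho> \<rho>0] uu_diff(2)[OF assms] by simp

lemma gg_diff:
  assumes "\<rho>0 \<le> \<rho>"
  shows "\<bar>gg l \<rho> - gg l \<rho>0\<bar> \<le> 2 * Ar * \<delta> \<rho>0"
proof -
  have q1': "1 \<le> q" using q1 by simp
  note V1 = Vop_Lp(1)[OF uu_Lp q1', of \<theta> \<xi>0 l \<rho>] and V2 = Vop_Lp(1)[OF uu_Lp q1', of \<theta> \<xi>0 l \<rho>0]
  have "\<bar>gg l \<rho> - gg l \<rho>0\<bar> \<le> LQ q (\<lambda>z. Vop \<theta> \<xi>0 l (uu \<rho>) z - Vop \<theta> \<xi>0 l (uu \<rho>0) z)"
    unfolding gg_def by (rule LQ_diff(2)[OF q1' V1 V2])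
  also have "(\<lambda>z. Vop \<theta> \<xi>0 l (uu \<rho>) z - Vop \<theta> \<xi>0 l (uu \<rho>0) z) = Vop \<theta> \<xi>0 l (\<lambda>z. uu \<rho> z - uu \<rho>0 z)"
    by (simp add: Vop_diff)
  also have "LQ q \<dots> \<le> 2 * LQ q (\<lambda>z. uu \<rho> z - uu \<rho>0 z)" by (rule Vop_Lp(2)[OF uu_diff(1)[OF assms] q1'])
  also have "\<dots> \<le> 2 * (Ar * \<delta> \<rho>0)" using uu_diff(2)[OF assms] by simp
  finally show ?thesis by simp
qed

lemma delta_lim: "(\<delta> \<longlongrightarrow> 0) at_top"
proof -
  have Jlim: "((\<lambda>\<rho>. J p (tl' \<rho>)) \<longlongrightarrow> 0) at_top"
  proof -
    have "((\<lambda>\<rho>. \<integral>\<xi>. (if norm \<xi> \<le> \<rho> then 0 else norm (f \<xi>) powr p) \<partial>lborel) \<longlongrightarrow> (integral\<^sup>L lborel (\<lambda>\<xi>::'a. 0::real))) at_top"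
    proof (rule integral_dominated_convergence_at_top[where w="\<lambda>\<xi>. norm (f \<xi>) powr p" and M=lborel and f="\<lambda>\<xi>. 0" and s="\<lambda>\<rho> \<xi>. if norm \<xi> \<le> \<rho> then 0 else norm (f \<xi>) powr p"])
      show "(\<lambda>\<xi>. 0::real) \<in> borel_measurable lborel" by simp
      show "(\<lambda>\<xi>. if norm \<xi> \<le> \<rho> then 0 else norm (f \<xi>) powr p) \<in> borel_measurable lborel" for \<rho>
        by measurable
      show "integrable lborel (\<lambda>\<xi>. norm (f \<xi>) powr p)" using in_Lp_integrable[OF f_Lp] .
      show "AE \<xi> in lborel. ((\<lambda>\<rho>. if norm \<xi> \<le> \<rho> then 0 else norm (f \<xi>) powr p) \<longlongrightarrow> 0) at_top"
      proof (intro AE_I2)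
        fix \<xi> :: 'a
        show "((\<lambda>\<rho>. if norm \<xi> \<le> \<rho> then 0 else norm (f \<xi>) powr p) \<longlongrightarrow> 0) at_top"
          by (rule tendsto_eventually) (use eventually_ge_at_top[of "norm \<xi>"] in \<open>eventually_elim, simp\<close>)
      qed
      show "\<forall>\<^sub>F \<rho> in at_top. AE \<xi> in lborel. norm (if norm \<xi> \<le> \<rho> then 0 else norm (f \<xi>) powr p) \<le> norm (f \<xi>) powr p"
        by (intro always_eventually allI AE_I2) simp
    qed
    moreover have "J p (tl' \<rho>) = (\<integral>\<xi>. (if norm \<xi> \<le> \<rho> then 0 else norm (f \<xi>) powr p) \<partial>lborel)" for \<rho>
      unfolding J_def tl'_def using p0 by (intro Bochner_Integration.integral_cong) auto
    ultimately show ?thesis by simp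
  qed
  have "((\<lambda>\<rho>. J p (tl' \<rho>) powr (1 / p)) \<longlongrightarrow> 0) at_top"
    by (rule tendsto_zero_powrI[OF Jlim tendsto_const]) (use p0 J_nonneg in \<open>auto intro: always_eventually\<close>)
  then show ?thesis unfolding \<delta>_def LQ_def by simp
qed

end



lemma cauchy_at_top:
  fixes g D :: "real \<Rightarrow> real"
  assumes D: "(D \<longlongrightarrow> 0) at_top" and bnd: "\<And>\<rho>0 \<rho>. \<rho>0 \<le> \<rho> \<Longrightarrow> \<bar>g \<rho> - g \<rho>0\<bar> \<le> D \<rho>0"
  shows "\<exists>L. (g \<longlongrightarrow> L) at_top \<and> (\<forall>\<rho>0. \<bar>L - g \<rho>0\<bar> \<le> D \<rho>0)"
proof -
  define s where "s n = g (real n)" for n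
  have "Cauchy s"
  proof (rule metric_CauchyI)
    fix e :: real assume e: "0 < e"
    have "eventually (\<lambda>x. D x < e / 2) at_top" using order_tendstoD(2)[OF D, of "e / 2"] e by simp
    then obtain N where N: "\<And>x. N \<le> x \<Longrightarrow> D x < e / 2" by (auto simp: eventually_at_top_linorder)
    define M where "M = nat \<lceil>N\<rceil>"
    have MN: "N \<le> real M" unfolding M_def by linarith
    show "\<exists>M. \<forall>m\<ge>M. \<forall>n\<ge>M. dist (s m) (s n) < e"
    proof (intro exI allI impI)
      fix m n assume "M \<le> m" "M \<le> n"
      then have "\<bar>s m - g (real M)\<bar> \<le> D (real M)" "\<bar>s n - g (real M)\<bar> \<le> D (real M)"
        unfolding s_def by (auto intro: bnd)
      moreover have "D (real M) < e / 2" using N MN by simp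
      ultimately show "dist (s m) (s n) < e" unfolding dist_real_def by linarith
    qed
  qed
  then obtain L where L: "s \<longlonglongrightarrow> L" using Cauchy_convergent_iff convergent_def by blast
  have bd: "\<bar>L - g \<rho>0\<bar> \<le> D \<rho>0" for \<rho>0
  proof (rule tendsto_upperbound)
    show "((\<lambda>n. \<bar>s n - g \<rho>0\<bar>) \<longlongrightarrow> \<bar>L - g \<rho>0\<bar>) sequentially" using L by (intro tendsto_intros)
    have "eventually (\<lambda>n. \<rho>0 \<le> real n) sequentially"
    proof -
      obtain N :: nat where "\<rho>0 \<le> real N" using real_arch_simple by blast
      then show ?thesis unfolding eventually_sequentially by (intro exI[of _ N]) auto
    qed
    then show "eventually (\<lambda>n. \<bar>s n - g \<rho>0\<bar> \<le> D \<rho>0) sequentially"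
      by eventually_elim (auto simp: s_def intro: bnd)
  qed simp
  have "((\<lambda>\<rho>. g \<rho> - L) \<longlongrightarrow> 0) at_top"
  proof (rule Lim_null_comparison[OF _ D])
    show "\<forall>\<^sub>F x in at_top. norm (g x - L) \<le> D x" using bd by (intro always_eventually) (simp add: abs_minus_commute)
  qed
  then have "(g \<longlongrightarrow> L) at_top" by (simp add: LIM_zero_iff)
  with bd show ?thesis by blast
qed

context setting begin

lemma gg_conv: "\<exists>L. (gg l \<longlongrightarrow> L) at_top \<and> (\<forall>\<rho>0. \<bar>L - gg l \<rho>0\<bar> \<le> 2 * Ar * \<delta> \<rho>0)"
  by (rule cauchy_at_top) (use delta_lim gg_diff in \<open>auto intro: tendsto_eq_intros\<close>)

lemma hh_conv: "\<exists>L. (hh \<longlongrightarrow> L) at_top \<and> (\<forall>\<rho>0. \<bar>L - hh \<rho>0\<bar> \<le> Ar * \<delta> \<rho>0)"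
  by (rule cauchy_at_top) (use delta_lim hh_diff in \<open>auto intro: tendsto_eq_intros\<close>)

definition "Lg l = Lim at_top (gg l)"
definition "HH = Lim at_top hh"

lemma Lg: "(gg l \<longlongrightarrow> Lg l) at_top" "\<bar>Lg l - gg l \<rho>0\<bar> \<le> 2 * Ar * \<delta> \<rho>0"
proof -
  obtain L where L: "(gg l \<longlongrightarrow> L) at_top" "\<forall>\<rho>0. \<bar>L - gg l \<rho>0\<bar> \<le> 2 * Ar * \<delta> \<rho>0" using gg_conv by blast
  have "Lg l = L" unfolding Lg_def using L(1) by (intro tendsto_Lim) auto
  with L show "(gg l \<longlongrightarrow> Lg l) at_top" "\<bar>Lg l - gg l \<rho>0\<bar> \<le> 2 * Ar * \<delta> \<rho>0" by auto
qed

lemma HH: "(hh \<longlongrightarrow> HH) at_top" "\<bar>HH - hh \<rho>0\<bar> \<le> Ar * \<delta> \<rho>0"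
proof -
  obtain L where L: "(hh \<longlongrightarrow> L) at_top" "\<forall>\<rho>0. \<bar>L - hh \<rho>0\<bar> \<le> Ar * \<delta> \<rho>0" using hh_conv by blast
  have "HH = L" unfolding HH_def using L(1) by (intro tendsto_Lim) auto
  with L show "(hh \<longlongrightarrow> HH) at_top" "\<bar>HH - hh \<rho>0\<bar> \<le> Ar * \<delta> \<rho>0" by auto
qed

lemma gg_nonneg: "0 \<le> gg l \<rho>" unfolding gg_def by (rule LQ_nonneg)
lemma hh_nonneg: "0 \<le> hh \<rho>" unfolding hh_def by (rule LQ_nonneg)

lemma Lg_nonneg: "0 \<le> Lg l"
  by (rule tendsto_lowerbound[OF Lg(1)]) (auto intro: always_eventually gg_nonneg)

lemma HH_nonneg: "0 \<le> HH"
  by (rule tendsto_lowerbound[OF HH(1)]) (auto intro: always_eventually hh_nonneg)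

lemma HH_val: "HH = Ar * LQ p f"
proof -
  have "ext_norm q ext_op f = Lim at_top (\<lambda>R. ennreal (hh R))"
    unfolding ext_norm_def hh_def uu_def kk_def using lpnorm_LQ[OF uu_Lp[unfolded uu_def kk_def]] by simp
  also have "\<dots> = ennreal HH"
    by (intro tendsto_Lim tendsto_ennrealI HH(1)) simp
  finally have "ennreal HH = ennreal Ar * ennreal (LQ p f)"
    using extremizer A_eq lpnorm_LQ[OF f_Lp] by simp
  then show ?thesis using Ar_nonneg LQ_nonneg[of p f] HH_nonneg by (simp add: ennreal_mult[symmetric])
qed

lemma ext_norm_scaled:
  assumes l: "0 < l"
  shows "ext_norm q (\<lambda>g z. ext_op g z + ext_op_shift \<tau>0 \<xi>0 g z)
                 (\<lambda>\<xi>. complex_of_real (l powr (real DIM('a) / p)) * f (l *\<^sub>R \<xi>)) = ennreal (Lg l)"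
proof -
  have d0: "0 < real DIM('a)" by simp
  have expo: "q * (real DIM('a) / p - real DIM('a)) + (real DIM('a) + 2) = 0"
    by (rule exponent_id[OF conj q_def d0 p_gt1])
  have tr: "trunc R (\<lambda>\<xi>. complex_of_real (l powr (real DIM('a) / p)) * f (l *\<^sub>R \<xi>))
      = (\<lambda>\<xi>. complex_of_real (l powr (real DIM('a) / p)) * kk (l * R) (l *\<^sub>R \<xi>))" for R
    unfolding kk_def trunc_def using l by (auto simp: fun_eq_iff)
  have km: "kk (l * R) \<in> borel_measurable borel" for R unfolding kk_def trunc_def by measurable
  have eqR: "lpnorm q ((\<lambda>g z. ext_op g z + ext_op_shift \<tau>0 \<xi>0 g z)
       (trunc R (\<lambda>\<xi>. complex_of_real (l powr (real DIM('a) / p)) * f (l *\<^sub>R \<xi>)))) = ennreal (gg l (l * R))" for R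
  proof -
    have "lpnorm q ((\<lambda>g z. ext_op g z + ext_op_shift \<tau>0 \<xi>0 g z)
       (trunc R (\<lambda>\<xi>. complex_of_real (l powr (real DIM('a) / p)) * f (l *\<^sub>R \<xi>))))
      = lpnorm q (Vop \<theta> \<xi>0 l (uu (l * R)))"
      unfolding tr uu_def \<theta>_def
      by (rule lpnorm_nn_cong, rule T_scale_nn[OF km l]) (use q1 expo in auto)
    also have "\<dots> = ennreal (gg l (l * R))"
      unfolding gg_def using q1 by (intro lpnorm_LQ Vop_Lp(1)[OF uu_Lp]) auto
    finally show ?thesis .
  qed
  have lim: "((\<lambda>R. gg l (l * R)) \<longlongrightarrow> Lg l) at_top"
    by (rule filterlim_compose[OF Lg(1)]) (rule filterlim_tendsto_pos_mult_at_top[OF tendsto_const l filterlim_ident])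
  show ?thesis unfolding ext_norm_def eqR
    by (intro tendsto_Lim tendsto_ennrealI lim) simp
qed

end



context setting begin

lemma gg_upper: "gg l \<rho> \<le> 2 * hh \<rho>"
  unfolding gg_def hh_def using Vop_Lp(2)[OF uu_Lp, of \<theta> \<xi>0 l \<rho>] q1 by simp

lemma Vop_lim:
  assumes L: "L \<longlonglongrightarrow> 0"
  shows "(\<lambda>n. Vop \<theta> \<xi>0 (L n) (uu \<rho>) z) \<longlonglongrightarrow> 2 * uu \<rho> z"
proof -
  obtain s y where z: "z = (s, y)" by (cases z)
  have Z: "(\<lambda>n. (s, y - (2 * L n * s) *\<^sub>R \<xi>0)) \<longlonglongrightarrow> (s, y)"
  proof -
    have "(\<lambda>n. (s, y - (2 * L n * s) *\<^sub>R \<xi>0)) \<longlonglongrightarrow> (s, y - (2 * 0 * s) *\<^sub>R \<xi>0)"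
      using L by (intro tendsto_intros)
    then show ?thesis by simp
  qed
  have u: "(\<lambda>n. uu \<rho> (s, y - (2 * L n * s) *\<^sub>R \<xi>0)) \<longlonglongrightarrow> uu \<rho> (s, y)"
    unfolding uu_def by (rule E_tendsto[OF kk_int Z])
  have e: "(\<lambda>n. exp (\<i> * complex_of_real ((L n)\<^sup>2 * s * \<theta>))) \<longlonglongrightarrow> exp (\<i> * complex_of_real (0\<^sup>2 * s * \<theta>))"
    using L by (intro tendsto_intros)
  have "(\<lambda>n. Vop \<theta> \<xi>0 (L n) (uu \<rho>) z) \<longlonglongrightarrow> uu \<rho> (s, y) + exp (\<i> * complex_of_real (0\<^sup>2 * s * \<theta>)) * uu \<rho> (s, y)"
    unfolding z Vop_def Psh_def fst_conv snd_conv by (intro tendsto_intros u e)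
  then show ?thesis unfolding z by simp
qed

lemma fatou_part:
  assumes e: "0 < \<epsilon>"
  shows "eventually (\<lambda>l. 2 * hh \<rho> - \<epsilon> < gg l \<rho>) (at_right 0)"
proof (cases "2 * hh \<rho> - \<epsilon> < 0")
  case True
  then show ?thesis using gg_nonneg by (intro always_eventually allI) (meson less_le_trans)
next
  case False
  define c where "c = 2 * hh \<rho> - \<epsilon>"
  have c0: "0 \<le> c" "c < 2 * hh \<rho>" using False e by (auto simp: c_def)
  have q0: "0 < q" using q1 by simp
  show ?thesis
  proof (rule sequentially_imp_eventually_at_right[of 0 1])
    fix L :: "nat \<Rightarrow> real" assume Lp: "\<And>n. 0 < L n" and L: "L \<longlonglongrightarrow> 0"
    define U where "U n z = ennreal (norm (Vop \<theta> \<xi>0 (L n) (uu \<rho>) z) powr q)" for n z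
    have um[measurable]: "uu \<rho> \<in> borel_measurable borel" using in_Lp_meas[OF uu_Lp] by simp
    have Um: "U n \<in> borel_measurable lborel" for n
    proof -
      have "Vop \<theta> \<xi>0 (L n) (uu \<rho>) \<in> borel_measurable borel"
        unfolding Vop_def using Psh_meas[OF um] by measurable
      then show ?thesis unfolding U_def by measurable
    qed
    have ptl: "liminf (\<lambda>n. U n z) = ennreal (norm (2 * uu \<rho> z) powr q)" for z
    proof (rule lim_imp_Liminf)
      show "((\<lambda>n. U n z) \<longlongrightarrow> ennreal (norm (2 * uu \<rho> z) powr q)) sequentially"
        unfolding U_def using Vop_lim[OF L, of \<rho> z] q0 by (intro tendsto_intros) auto
    qed simp
    have "(\<integral>\<^sup>+z. liminf (\<lambda>n. U n z) \<partial>lborel) \<le> liminf (\<lambda>n. \<integral>\<^sup>+z. U n z \<partial>lborel)"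
      by (rule nn_integral_liminf[OF Um])
    moreover have "(\<integral>\<^sup>+z. liminf (\<lambda>n. U n z) \<partial>lborel) = ennreal ((2 * hh \<rho>) powr q)"
    proof -
      have "(\<integral>\<^sup>+z. liminf (\<lambda>n. U n z) \<partial>lborel) = (\<integral>\<^sup>+z. ennreal (norm ((\<lambda>z. 2 * uu \<rho> z) z) powr q) \<partial>lborel)"
        by (simp add: ptl)
      also have "\<dots> = ennreal (J q (\<lambda>z. 2 * uu \<rho> z))"
        by (rule nn_J[OF in_Lp_scale(1)[OF uu_Lp q0]])
      also have "J q (\<lambda>z. 2 * uu \<rho> z) = LQ q (\<lambda>z. 2 * uu \<rho> z) powr q" using q0 by (rule J_LQ)
      also have "LQ q (\<lambda>z. 2 * uu \<rho> z) = 2 * hh \<rho>"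
        unfolding hh_def using in_Lp_scale(2)[OF uu_Lp q0, of 2] by simp
      finally show ?thesis .
    qed
    moreover have "(\<integral>\<^sup>+z. U n z \<partial>lborel) = ennreal (gg (L n) \<rho> powr q)" for n
    proof -
      have "(\<integral>\<^sup>+z. U n z \<partial>lborel) = ennreal (J q (Vop \<theta> \<xi>0 (L n) (uu \<rho>)))"
        unfolding U_def using q1 by (intro nn_J Vop_Lp(1)[OF uu_Lp]) auto
      then show ?thesis unfolding gg_def by (simp only: J_LQ[OF q0])
    qed
    ultimately have le: "ennreal ((2 * hh \<rho>) powr q) \<le> liminf (\<lambda>n. ennreal (gg (L n) \<rho> powr q))" by simp
    have "c powr q < (2 * hh \<rho>) powr q" using c0 q0 by (intro powr_less_mono2) auto
    then have "ennreal (c powr q) < ennreal ((2 * hh \<rho>) powr q)"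
      using c0 by (subst ennreal_less_iff) auto
    with le have "ennreal (c powr q) < liminf (\<lambda>n. ennreal (gg (L n) \<rho> powr q))" by simp
    then have "eventually (\<lambda>n. ennreal (c powr q) < ennreal (gg (L n) \<rho> powr q)) sequentially"
      by (rule less_LiminfD)
    then show "eventually (\<lambda>n. 2 * hh \<rho> - \<epsilon> < gg (L n) \<rho>) sequentially"
    proof eventually_elim
      case (elim n)
      then have lt: "c powr q < gg (L n) \<rho> powr q" by (simp add: ennreal_less_iff)
      show ?case
      proof (rule ccontr)
        assume "\<not> 2 * hh \<rho> - \<epsilon> < gg (L n) \<rho>"
        then have "gg (L n) \<rho> \<le> c" by (simp add: c_def)
        then have "gg (L n) \<rho> powr q \<le> c powr q" using gg_nonneg q0 by (intro powr_mono2) auto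
        with lt show False by simp
      qed
    qed
  qed simp
qed

end



context setting begin

lemma main_lim: "(Lg \<longlongrightarrow> 2 * HH) (at_right 0)"
proof (rule tendstoI)
  fix e :: real assume e: "0 < e"
  have "((\<lambda>\<rho>. Ar * \<delta> \<rho>) \<longlongrightarrow> Ar * 0) at_top" by (intro tendsto_intros delta_lim)
  then have "eventually (\<lambda>\<rho>. Ar * \<delta> \<rho> < e / 8) at_top"
    using order_tendstoD(2)[of "\<lambda>\<rho>. Ar * \<delta> \<rho>" 0 at_top "e / 8"] e by simp
  then obtain \<rho>0 where r0: "Ar * \<delta> \<rho>0 < e / 8" by (auto simp: eventually_at_top_linorder)
  have e4: "0 < e / 4" using e by simp
  show "eventually (\<lambda>l. dist (Lg l) (2 * HH) < e) (at_right 0)"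
    using fatou_part[OF e4, of \<rho>0]
  proof eventually_elim
    case (elim l)
    have 1: "\<bar>Lg l - gg l \<rho>0\<bar> \<le> 2 * Ar * \<delta> \<rho>0" by (rule Lg(2))
    have 2: "\<bar>HH - hh \<rho>0\<bar> \<le> Ar * \<delta> \<rho>0" by (rule HH(2))
    have 3: "gg l \<rho>0 \<le> 2 * hh \<rho>0" by (rule gg_upper)
    show ?case unfolding dist_real_def using 1 2 3 elim r0 by linarith
  qed
qed

lemma LQ_f_pos: "0 < LQ p f"
  using f_nz lpnorm_LQ[OF f_Lp] LQ_nonneg[of p f] by (cases "LQ p f = 0") auto

lemma final:
  "((\<lambda>l. ext_norm q (\<lambda>g z. ext_op g z + ext_op_shift \<tau>0 \<xi>0 g z)
                 (\<lambda>\<xi>. complex_of_real (l powr (real DIM('a) / p)) * f (l *\<^sub>R \<xi>))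
             / (ennreal (2 powr (1 / p)) * lpnorm p f))
          \<longlongrightarrow> ennreal (2 powr (1 / p')) * A_const p q TYPE('a)) (at_right 0)"
proof -
  define D where "D = 2 powr (1 / p) * LQ p f"
  have D0: "0 < D" unfolding D_def using LQ_f_pos by simp
  have ev: "eventually (\<lambda>l. ext_norm q (\<lambda>g z. ext_op g z + ext_op_shift \<tau>0 \<xi>0 g z)
                 (\<lambda>\<xi>. complex_of_real (l powr (real DIM('a) / p)) * f (l *\<^sub>R \<xi>))
             / (ennreal (2 powr (1 / p)) * lpnorm p f) = ennreal (Lg l / D)) (at_right 0)"
    using eventually_at_right_less[of "0::real"]
  proof eventually_elim
    case (elim l)
    have "ennreal (2 powr (1 / p)) * lpnorm p f = ennreal D"
      unfolding D_def lpnorm_LQ[OF f_Lp] using LQ_nonneg[of p f] by (simp add: ennreal_mult)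
    then show ?case using ext_norm_scaled[OF elim] D0 Lg_nonneg[of l] by (simp add: divide_ennreal)
  qed
  have val: "2 * HH / D = 2 powr (1 / p') * Ar"
  proof -
    have "1 / p' = 1 - 1 / p" using conj by simp
    then have "2 powr (1 / p') = 2 / 2 powr (1 / p)" by (simp add: powr_diff)
    then show ?thesis unfolding HH_val D_def using LQ_f_pos by simp
  qed
  have "((\<lambda>l. ennreal (Lg l / D)) \<longlongrightarrow> ennreal (2 powr (1 / p') * Ar)) (at_right 0)"
    unfolding val[symmetric] using D0 by (intro tendsto_ennrealI tendsto_intros main_lim) auto
  moreover have "ennreal (2 powr (1 / p') * Ar) = ennreal (2 powr (1 / p')) * A_const p q TYPE('a)"
    using A_eq Ar_nonneg by (simp add: ennreal_mult)
  ultimately show ?thesis using tendsto_cong[OF ev] by simp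
qed

end


theorem proposition2p2:
  fixes p p' q :: real and f :: "'a::euclidean_space \<Rightarrow> complex"
    and \<tau>0 :: real and \<xi>0 :: 'a
  assumes p_gt1: "1 < p"
    and conj: "1 / p + 1 / p' = 1"
    and q_def: "q = (real DIM('a) + 2) / real DIM('a) * p'"
    and q_gt_p: "q > p"
    and A_fin: "A_const p q TYPE('a) < \<infinity>"
    and f_Lp: "in_Lp p f"
    and f_nz: "lpnorm p f \<noteq> 0"
    and extremizer: "ext_norm q ext_op f = A_const p q TYPE('a) * lpnorm p f"
  shows "((\<lambda>l. ext_norm q (\<lambda>g z. ext_op g z + ext_op_shift \<tau>0 \<xi>0 g z)
                 (\<lambda>\<xi>. complex_of_real (l powr (real DIM('a) / p)) * f (l *\<^sub>R \<xi>))
             / (ennreal (2 powr (1 / p)) * lpnorm p f))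
          \<longlongrightarrow> ennreal (2 powr (1 / p')) * A_const p q TYPE('a)) (at_right 0)"
proof -
  interpret setting p p' q f \<tau>0 \<xi>0
    by unfold_locales (use assms in auto)
  show ?thesis by (rule final)
qed

end
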